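(* Let $n\ge 2$, let $d:L_n\to L_n$ be any map, and put $v=\frac{n-2}{n-1}$. Suppose $d(v)\le v$. Then $d$ is a $(\odot,\vee)$-derivation on $L_n$ if and only if both of the following hold: (1) $d(v^m)=v^{m-1}\odot d(v)$ for each $m\in\{1,2,\dots,n-1\}$ (where $v^0=1$ and $v^m=v\odot\cdots\odot v$ with $m$ factors); (2) $v\odot d(1)\le d(v)$.
   Context: An MV-algebra is an algebra $(A,\oplus,{}^*,0)$ of type $(2,1,0)$ satisfying: $x\oplus(y\oplus z)=(x\oplus y)\oplus z$, $x\oplus y=y\oplus x$, $x\oplus 0=x$, $x^{**}=x$, $x\oplus 0^*=0^*$, $(x^*\oplus y)^*\oplus y=(y^*\oplus x)^*\oplus x$. Put $1=0^*$ and $x\odot y=(x^*\oplus y^* )^*$. The natural order is $x\le y$ iff $x^*\oplus y=1$, with lattice operations $x\vee y=(x\odot y^* )\oplus y$, $x\wedge y=x\odot(x^*\oplus y)$. A $(\odot,\vee)$-derivation on $A$ is a map $d:A\to A$ with $d(x\odot y)=(d(x)\odot y)\vee(x\odot d(y))$ for all $x,y\in A$. $L_n=\{0,\frac1{n-1},\dots,\frac{n-2}{n-1},1\}$ with $x\oplus y=\min\{1,x+y\}$, $x^*=1-x$. *)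

theory Defs
  imports Complex_Main
begin

definition Ln :: "nat \<Rightarrow> real set" where
  "Ln n = (\<lambda>k. real k / (real n - 1)) ` {0..n - 1}"

definition mv_oplus :: "real \<Rightarrow> real \<Rightarrow> real" where
  "mv_oplus x y = min 1 (x + y)"

definition mv_star :: "real \<Rightarrow> real" where
  "mv_star x = 1 - x"

definition mv_odot :: "real \<Rightarrow> real \<Rightarrow> real" where
  "mv_odot x y = mv_star (mv_oplus (mv_star x) (mv_star y))"

definition mv_join :: "real \<Rightarrow> real \<Rightarrow> real" where
  "mv_join x y = mv_oplus (mv_odot x (mv_star y)) y"

definition mv_le :: "real \<Rightarrow> real \<Rightarrow> bool" where
  "mv_le x y \<longleftrightarrow> mv_oplus (mv_star x) y = 1"

primrec mv_pow :: "real \<Rightarrow> nat \<Rightarrow> real" where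
  "mv_pow x 0 = 1"
| "mv_pow x (Suc m) = mv_odot x (mv_pow x m)"

definition odot_join_derivation :: "real set \<Rightarrow> (real \<Rightarrow> real) \<Rightarrow> bool" where
  "odot_join_derivation A d \<longleftrightarrow>
     (\<forall>x\<in>A. \<forall>y\<in>A. d (mv_odot x y) = mv_join (mv_odot (d x) y) (mv_odot x (d y)))"

end

theory Submission
  imports Defs
begin

lemma odot_eq: "mv_odot x y = max 0 (x + y - 1)"
  by (simp add: mv_odot_def mv_oplus_def mv_star_def min_def max_def)

lemma join_eq: "mv_join a b = min 1 (max a b)"
  by (simp add: mv_join_def odot_eq mv_oplus_def mv_star_def min_def max_def)

lemma le_eq: "mv_le x y \<longleftrightarrow> x \<le> y"
  by (simp add: mv_le_def mv_oplus_def mv_star_def min_def)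

lemma pow_eq:
  assumes "N > 0"
  shows "mv_pow (1 - 1/N) m = max 0 (1 - real m / N)"
proof (induction m)
  case 0 then show ?case by simp
next
  case (Suc m)
  have e: "real (Suc m) / N = real m / N + 1 / N" by (simp add: add_divide_distrib)
  have s: "0 < 1 / N" using assms by simp
  have aux: "\<And>s b::real. s > 0 \<Longrightarrow> max 0 (1 - s + max 0 b - 1) = max 0 (b - s)"
    by (auto simp: max_def)
  have "mv_pow (1 - 1/N) (Suc m) = max 0 (1 - 1/N + max 0 (1 - real m / N) - 1)"
    by (simp add: odot_eq Suc.IH)
  also have "\<dots> = max 0 (1 - real m / N - 1 / N)" by (rule aux[OF s])
  finally show ?case using e by simp
qed

lemma Ln_mem:
  assumes "n \<ge> 2" "x \<in> Ln n"
  shows "\<exists>k. k \<le> n - 1 \<and> x = real k / (real n - 1)"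
  using assms by (auto simp: Ln_def)

lemma Ln_props:
  assumes "n \<ge> 2" "x \<in> Ln n"
  shows "0 \<le> x \<and> x \<le> 1 \<and> (x = 1 \<or> x \<le> 1 - 1 / (real n - 1))"
proof -
  obtain k where k: "k \<le> n - 1" "x = real k / (real n - 1)" using Ln_mem assms by blast
  have N: "real n - 1 > 0" using assms by simp
  have rk: "real k \<le> real n - 1" using k assms by linarith
  have "x \<le> 1" using k rk N by simp
  moreover have "0 \<le> x" using k N by simp
  moreover have "x = 1 \<or> x \<le> 1 - 1 / (real n - 1)"
  proof (cases "k = n - 1")
    case True then show ?thesis using k N assms by simp
  next
    case False
    then have "real k \<le> real n - 2" using k assms by linarith
    then have "x \<le> (real n - 2) / (real n - 1)" using k N by (simp add: divide_right_mono)
    also have "\<dots> = 1 - 1 / (real n - 1)" using N by (simp add: field_simps)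
    finally show ?thesis by simp
  qed
  ultimately show ?thesis by blast
qed

lemma Ln_one: "n \<ge> 2 \<Longrightarrow> 1 \<in> Ln n"
  unfolding Ln_def by (rule image_eqI[where x="n - 1"]) auto

lemma Ln_v: "n \<ge> 2 \<Longrightarrow> 1 - 1 / (real n - 1) \<in> Ln n"
  unfolding Ln_def
proof (rule image_eqI[where x="n - 2"])
  assume "n \<ge> 2"
  then show "1 - 1 / (real n - 1) = real (n - 2) / (real n - 1)"
    by (simp add: field_simps of_nat_diff)
qed auto

lemma Ln_odot:
  assumes "n \<ge> 2" "x \<in> Ln n" "y \<in> Ln n"
  shows "max 0 (x + y - 1) \<in> Ln n"
proof -
  obtain k where k: "k \<le> n - 1" "x = real k / (real n - 1)" using Ln_mem assms by blast
  obtain l where l: "l \<le> n - 1" "y = real l / (real n - 1)" using Ln_mem assms by blast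
  have N: "real n - 1 > 0" using assms by simp
  show ?thesis unfolding Ln_def
  proof (rule image_eqI[where x="k + l - (n - 1)"])
    show "max 0 (x + y - 1) = real (k + l - (n - 1)) / (real n - 1)"
    proof (cases "k + l \<ge> n - 1")
      case True
      then have "real (k + l - (n - 1)) = real k + real l - (real n - 1)"
        using assms by (simp add: of_nat_diff)
      moreover have "x + y - 1 = (real k + real l - (real n - 1)) / (real n - 1)"
        using k l N by (simp add: field_simps)
      moreover have "real k + real l - (real n - 1) \<ge> 0" using True assms by linarith
      ultimately show ?thesis using N by simp
    next
      case False
      then have "real k + real l - (real n - 1) < 0" using assms by linarith
      moreover have "x + y - 1 = (real k + real l - (real n - 1)) / (real n - 1)"
        using k l N by (simp add: field_simps)
      ultimately have "x + y - 1 < 0" using N by (simp add: divide_neg_pos)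
      then show ?thesis using False by simp
    qed
  qed (use k l in auto)
qed

lemma Ln_pow:
  assumes "n \<ge> 2" "m \<le> n - 1"
  shows "max 0 (1 - real m / (real n - 1)) \<in> Ln n"
  unfolding Ln_def
proof (rule image_eqI[where x="n - 1 - m"])
  have N: "real n - 1 > 0" using assms by simp
  have "real (n - 1 - m) = real n - 1 - real m" using assms by (simp add: of_nat_diff)
  moreover have "real m \<le> real n - 1" using assms by linarith
  ultimately show "max 0 (1 - real m / (real n - 1)) = real (n - 1 - m) / (real n - 1)"
    using N by (simp add: field_simps)
qed auto

lemma A: fixes a s c :: real
  assumes "0 \<le> a" "0 < s" "a + 2*s \<le> 1" "0 \<le> c" "c \<le> 1"
  shows "min 1 (max (max 0 (c + max 0 (1 - (a + s)) - 1)) (max 0 (1 - s + max 0 (max 0 (1 - a) + c - 1) - 1))) = max 0 (max 0 (1 - (a+s)) + c - 1)"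
proof -
  have "max 0 (1 - (a + s)) = 1 - (a+s)" "max 0 (1 - a) = 1 - a" using assms by auto
  then show ?thesis using assms by (simp add: max_def min_def)
qed
lemma B: fixes x y c v :: real
  assumes "0 \<le> x" "x \<le> v" "0 \<le> y" "y \<le> v" "v < 1" "0 \<le> c" "c \<le> v"
  shows "max 0 (max 0 (x+y-1) + c - v) = min 1 (max (max 0 (max 0 (x + c - v) + y - 1)) (max 0 (x + max 0 (y + c - v) - 1)))"
proof (cases "x + y - 1 \<le> 0")
  case True
  have "max 0 (x+y-1) = 0" using True by simp
  moreover have "max 0 (max 0 (x + c - v) + y - 1) = 0" using assms True by (simp add: max_def)
  moreover have "max 0 (x + max 0 (y + c - v) - 1) = 0" using assms True by (simp add: max_def)
  ultimately show ?thesis using assms by simp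
next
  case False
  have "max 0 (max 0 (x + c - v) + y - 1) = max 0 (x + y - 1 + c - v)" using assms False by (simp add: max_def)
  moreover have "max 0 (x + max 0 (y + c - v) - 1) = max 0 (x + y - 1 + c - v)" using assms False by (simp add: max_def)
  ultimately show ?thesis using assms False by (simp add: max_def min_def)
qed
lemma C: fixes y c v d1 dy :: real
  assumes "0 \<le> y" "y \<le> v" "v < 1" "0 \<le> c" "c \<le> v" "max 0 (v + d1 - 1) \<le> c" "dy = max 0 (y + c - v)"
  shows "dy = min 1 (max (max 0 (d1 + y - 1)) (max 0 (1 + dy - 1)))"
proof -
  have "max 0 (1 + dy - 1) = dy" using assms by simp
  have "v + d1 - 1 \<le> c" using assms(6) by simp
  then have "max 0 (d1 + y - 1) \<le> dy" using assms by (auto simp: max_def)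
  moreover
  moreover have "dy \<le> 1" using assms by (simp add: max_def)
  moreover have "0 \<le> dy" using assms by simp
  ultimately show ?thesis by (simp add: max_def min_def)
qed
lemma C2: fixes x c v d1 dx :: real
  assumes "0 \<le> x" "x \<le> v" "v < 1" "0 \<le> c" "c \<le> v" "max 0 (v + d1 - 1) \<le> c" "dx = max 0 (x + c - v)"
  shows "dx = min 1 (max (max 0 (dx + 1 - 1)) (max 0 (x + d1 - 1)))"
  using C[OF assms] by (simp add: ac_simps)

lemma G: "(c::real) < 1 \<Longrightarrow> c = min 1 (max c w) \<Longrightarrow> w \<le> c"
  by (auto simp: min_def max_def split: if_splits)

lemma core:
  fixes n :: nat and d :: "real \<Rightarrow> real" and N :: real
  assumes n2: "n \<ge> 2" and NN: "N = real n - 1"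
    and rng: "\<forall>x\<in>Ln n. d x \<in> Ln n"
    and cv: "d (1 - 1/N) \<le> 1 - 1/N"
  shows "(\<forall>x\<in>Ln n. \<forall>y\<in>Ln n. d (max 0 (x+y-1)) = min 1 (max (max 0 (d x + y - 1)) (max 0 (x + d y - 1))))
     \<longleftrightarrow> ((\<forall>m\<in>{1..n-1}. d (max 0 (1 - real m/N)) = max 0 (max 0 (1 - real (m-1)/N) + d (1-1/N) - 1))
          \<and> max 0 (1 - 1/N + d 1 - 1) \<le> d (1-1/N))"
proof -
  define v where "v = 1 - 1/N"
  define c where "c = d v"
  define s where "s = 1/N"
  have N1: "N \<ge> 1" using n2 NN by simp
  have s0: "0 < s" "s \<le> 1" using N1 by (auto simp: s_def)
  have vs: "v = 1 - s" by (simp add: v_def s_def)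
  have vL: "v \<in> Ln n" using Ln_v[OF n2] NN v_def by simp
  have oL: "1 \<in> Ln n" using Ln_one[OF n2] .
  have cr: "0 \<le> c \<and> c \<le> 1" using rng vL Ln_props[OF n2] by (auto simp: c_def)
  have d1r: "0 \<le> d 1 \<and> d 1 \<le> 1" using rng oL Ln_props[OF n2] by auto
  have cle: "c \<le> v" using cv by (simp add: c_def v_def)
  have props: "\<And>x. x \<in> Ln n \<Longrightarrow> 0 \<le> x \<and> x \<le> 1 \<and> (x = 1 \<or> x \<le> v)"
    using Ln_props[OF n2] NN v_def by auto
  have dprops: "\<And>x. x \<in> Ln n \<Longrightarrow> 0 \<le> d x \<and> d x \<le> 1"
    using rng props by blast
  have frac: "\<And>k. real k / N = real k * s" by (simp add: s_def)
  show ?thesis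
    unfolding v_def[symmetric] c_def[symmetric]
  proof
    assume D: "\<forall>x\<in>Ln n. \<forall>y\<in>Ln n. d (max 0 (x+y-1)) = min 1 (max (max 0 (d x + y - 1)) (max 0 (x + d y - 1)))"
    have step: "k + 1 \<le> n - 1 \<Longrightarrow> d (max 0 (1 - real (k+1)/N)) = max 0 (max 0 (1 - real k/N) + c - 1)" for k
    proof (induction k)
      case 0
      have "max 0 (1 - real (0+1)/N) = v" using s0 vs by (simp add: s_def)
      then show ?case using cr by (simp add: c_def)
    next
      case (Suc k)
      have IH: "d (max 0 (1 - real (k+1)/N)) = max 0 (max 0 (1 - real k/N) + c - 1)"
        using Suc by simp
      have bnd: "real (k+2) \<le> N" using Suc.prems NN n2 by linarith
      have bnd': "real k * s + 2 * s \<le> 1"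
      proof -
        have "real (k+2) / N \<le> 1" using bnd N1 by simp
        moreover have "real (k+2) / N = real k * s + 2 * s" using N1 by (simp add: s_def field_simps)
        ultimately show ?thesis by simp
      qed
      have a0: "0 \<le> real k * s" using s0 by simp
      have kk: "k+1 \<le> n-1" using Suc.prems by simp
      have pL: "max 0 (1 - real (k+1)/N) \<in> Ln n" unfolding NN using Ln_pow[OF n2 kk] .
      have e1: "real (k+1) / N = real k * s + s" using N1 by (simp add: s_def field_simps)
      have e2: "real (Suc k + 1) / N = real k * s + 2 * s" using N1 by (simp add: s_def field_simps)
      have arg: "max 0 (v + max 0 (1 - real (k+1)/N) - 1) = max 0 (1 - real (Suc k+1)/N)"
        unfolding e1 e2 vs using bnd' a0 s0 by (auto simp: max_def)
      have e0: "real (Suc k) / N = real k * s + s" using N1 by (simp add: s_def field_simps)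
      have "d (max 0 (1 - real (Suc k+1)/N)) = min 1 (max (max 0 (c + max 0 (1 - real (k+1)/N) - 1)) (max 0 (v + d (max 0 (1 - real (k+1)/N)) - 1)))"
      proof -
        have "d (max 0 (v + max 0 (1 - real (k+1)/N) - 1)) = min 1 (max (max 0 (d v + max 0 (1 - real (k+1)/N) - 1)) (max 0 (v + d (max 0 (1 - real (k+1)/N)) - 1)))"
          using D vL pL by blast
        then show ?thesis unfolding arg c_def .
      qed
      also have "\<dots> = min 1 (max (max 0 (c + max 0 (1 - (real k * s + s)) - 1)) (max 0 (1 - s + max 0 (max 0 (1 - real k * s) + c - 1) - 1)))"
        unfolding IH unfolding e1 by (simp only: vs frac)
      also have "\<dots> = max 0 (max 0 (1 - (real k * s + s)) + c - 1)"
        using A[of "real k * s" s c] a0 s0 bnd' cr by blast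
      also have "\<dots> = max 0 (max 0 (1 - real (Suc k)/N) + c - 1)" by (simp only: e0)
      finally show ?case .
    qed
    have P1: "\<forall>m\<in>{1..n-1}. d (max 0 (1 - real m/N)) = max 0 (max 0 (1 - real (m-1)/N) + c - 1)"
    proof
      fix m assume m: "m \<in> {1..n-1}"
      then obtain k where k: "m = k + 1" by (metis Suc_eq_plus1 atLeastAtMost_iff not0_implies_Suc not_one_le_zero)
      show "d (max 0 (1 - real m/N)) = max 0 (max 0 (1 - real (m-1)/N) + c - 1)"
        using step[of k] m k by simp
    qed
    have "max 0 (v + 1 - 1) = v" using vs s0 by simp
    moreover have "d (max 0 (v + 1 - 1)) = min 1 (max (max 0 (d v + 1 - 1)) (max 0 (v + d 1 - 1)))"
      using D vL oL by blast
    ultimately have "c = min 1 (max (max 0 (c + 1 - 1)) (max 0 (v + d 1 - 1)))"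
      using cr unfolding c_def by simp
    moreover have "max 0 (c + 1 - 1) = c" using cr by simp
    ultimately have ceq: "c = min 1 (max c (max 0 (v + d 1 - 1)))" by simp
    have "c < 1" using cle vs s0 by simp
    then have P2: "max 0 (v + d 1 - 1) \<le> c" using ceq G by blast
    show "(\<forall>m\<in>{1..n-1}. d (max 0 (1 - real m/N)) = max 0 (max 0 (1 - real (m-1)/N) + c - 1)) \<and> max 0 (v + d 1 - 1) \<le> c"
      using P1 P2 by blast
  next
    assume H: "(\<forall>m\<in>{1..n-1}. d (max 0 (1 - real m/N)) = max 0 (max 0 (1 - real (m-1)/N) + c - 1)) \<and> max 0 (v + d 1 - 1) \<le> c"
    then have H1: "\<forall>m\<in>{1..n-1}. d (max 0 (1 - real m/N)) = max 0 (max 0 (1 - real (m-1)/N) + c - 1)"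
      and H2: "max 0 (v + d 1 - 1) \<le> c" by auto
    have F: "d x = max 0 (x + c - v)" if xL: "x \<in> Ln n" and xv: "x \<le> v" for x
    proof -
      obtain k where k: "k \<le> n - 1" "x = real k / (real n - 1)" using Ln_mem[OF n2 xL] by blast
      have kne: "k \<noteq> n - 1"
      proof
        assume "k = n - 1"
        then have "x = 1" using k n2 by (simp add: of_nat_diff)
        then show False using xv vs s0 by simp
      qed
      define m where "m = n - 1 - k"
      have m1: "m \<in> {1..n-1}" using kne k by (auto simp: m_def)
      have rm: "real m = N - real k" using k n2 NN by (simp add: m_def of_nat_diff)
      have rm1: "real (m - 1) = N - real k - 1" using m1 rm by (simp add: of_nat_diff)
      have xk: "x = real k / N" using k NN by simp
      have q1: "real m / N = 1 - x" using rm N1 xk by (simp add: diff_divide_distrib)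
      have q2: "real (m-1) / N = 1 - x - s" using rm1 N1 xk by (simp add: diff_divide_distrib s_def)
      have x0: "x \<ge> 0" using props xL by blast
      have "d x = d (max 0 (1 - real m/N))" using q1 x0 by simp
      also have "\<dots> = max 0 (max 0 (1 - real (m-1)/N) + c - 1)" using H1 m1 by blast
      also have "\<dots> = max 0 (x + c - v)" unfolding q2 vs using x0 s0 by (auto simp: max_def)
      finally show ?thesis .
    qed
    show "\<forall>x\<in>Ln n. \<forall>y\<in>Ln n. d (max 0 (x+y-1)) = min 1 (max (max 0 (d x + y - 1)) (max 0 (x + d y - 1)))"
    proof (intro ballI)
      fix x y assume xL: "x \<in> Ln n" and yL: "y \<in> Ln n"
      have zL: "max 0 (x+y-1) \<in> Ln n" using Ln_odot[OF n2 xL yL] .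
      have px: "0 \<le> x \<and> x \<le> 1 \<and> (x = 1 \<or> x \<le> v)" using props xL .
      have py: "0 \<le> y \<and> y \<le> 1 \<and> (y = 1 \<or> y \<le> v)" using props yL .
      have dx: "0 \<le> d x \<and> d x \<le> 1" using dprops xL .
      have dy: "0 \<le> d y \<and> d y \<le> 1" using dprops yL .
      show "d (max 0 (x+y-1)) = min 1 (max (max 0 (d x + y - 1)) (max 0 (x + d y - 1)))"
      proof (cases "x = 1")
        case x1: True
        show ?thesis
        proof (cases "y = 1")
          case True then show ?thesis using x1 d1r by (simp add: max_def min_def)
        next
          case False
          then have yv: "y \<le> v" using py by blast
          have "d y = max 0 (y + c - v)" using F yL yv by blast
          then show ?thesis using x1 C[of y v c d1 "d y"] py yv H2 vs s0 cle cr by simp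
        qed
      next
        case False
        then have xv: "x \<le> v" using px by blast
        have Fx: "d x = max 0 (x + c - v)" using F xL xv by blast
        show ?thesis
        proof (cases "y = 1")
          case True then show ?thesis using C2[of x v c d1 "d x"] Fx px xv H2 vs s0 cle cr by simp
        next
          case False
          then have yv: "y \<le> v" using py by blast
          have Fy: "d y = max 0 (y + c - v)" using F yL yv by blast
          have zv: "max 0 (x+y-1) \<le> v" using px py yv vs s0 by (auto simp: max_def)
          have Fz: "d (max 0 (x+y-1)) = max 0 (max 0 (x+y-1) + c - v)" using F zL zv by blast
          show ?thesis unfolding Fz Fx Fy using B[of x v y c] px py xv yv vs s0 cle cr by simp
        qed
      qed
    qed
  qed
qed

theorem theorem3p10:
  fixes n :: nat and d :: "real \<Rightarrow> real"
  assumes "n \<ge> 2"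
    and "\<forall>x\<in>Ln n. d x \<in> Ln n"
    and "mv_le (d ((real n - 2) / (real n - 1))) ((real n - 2) / (real n - 1))"
  shows "odot_join_derivation (Ln n) d \<longleftrightarrow>
    ((\<forall>m\<in>{1..n - 1}. d (mv_pow ((real n - 2) / (real n - 1)) m) =
        mv_odot (mv_pow ((real n - 2) / (real n - 1)) (m - 1)) (d ((real n - 2) / (real n - 1))))
     \<and> mv_le (mv_odot ((real n - 2) / (real n - 1)) (d 1)) (d ((real n - 2) / (real n - 1))))"
proof -
  have N: "real n - 1 > 0" using assms by simp
  have v: "(real n - 2) / (real n - 1) = 1 - 1 / (real n - 1)" using N by (simp add: field_simps)
  note C = core[OF assms(1) refl assms(2)]
  have cv: "d (1 - 1 / (real n - 1)) \<le> 1 - 1 / (real n - 1)" using assms(3) v by (simp add: le_eq)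
  have pw: "\<And>m. mv_pow (1 - 1 / (real n - 1)) m = max 0 (1 - real m / (real n - 1))"
    using pow_eq[OF N] by blast
  have com: "\<And>a b::real. max 0 (a + b - 1) = max 0 (b + a - 1)" by (simp add: add.commute)
  show ?thesis unfolding v odot_join_derivation_def odot_eq join_eq le_eq pw
    using C[OF cv] by (simp only: com)
qed

end
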